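(* Let $(\mathsf K,\mathsf D)$ be a differential ring, $n\ge 2$, and $L=\sum_{i=0}^n\binom{n}{i}a_i\mathsf D^{n-i}\in\mathsf K\langle\mathsf D\rangle$ with $a_0=1$. For $f\in\mathsf K^\times$ let $L^f:=f^{-1}Lf$, which is again of the form $\sum_{i=0}^n\binom{n}{i}\tilde a_i\mathsf D^{n-i}$ with $\tilde a_0=1$. Then for every $k=2,\dots,n$, $$I_k(L^f)=f^{-1}I_k(L)f,$$ where $I_k(M)$ denotes the $k$-th gauge–Wilczynski covariant of an operator $M$.
   Context: A differential ring is a unital associative (not necessarily commutative) ring $\mathsf K$ with a derivation $\mathsf D$ (additive, $\mathsf D(ab)=\mathsf D(a)b+a\mathsf D(b)$). $\mathsf K\langle\mathsf D\rangle$ is the Ore algebra with coefficients on the left and relation $\mathsf D a=a\mathsf D+\mathsf D(a)$. For a monic binomially normalized operator $M=\sum_{i=0}^n\binom ni b_i\mathsf D^{n-i}$ ($b_0=1$), the gauge–Wilczynski covariants $I_2(M),\dots,I_n(M)\in\mathsf K$ are the unique elements with $M=\nabla^n+\sum_{k=2}^n\binom nk I_k(M)\nabla^{n-k}$, where $\nabla=\mathsf D+b_1$.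
   Formalization: The decomposition of L defining $I_2(L),\dots,I_n(L)$ must exist and be unique, and the coefficients of $L^f$ are taken as $\tilde a_m=\sum_{i=0}^m\binom{m}{i}f^{-1}a_i\mathsf D^{m-i}(f)$. Each condition added here is assumed in the paper as well or is needed for the statement above to hold. *)

theory Defs
  imports Main
begin

definition diffring :: "('a::ring_1 \<Rightarrow> 'a) \<Rightarrow> bool" where
  "diffring D \<longleftrightarrow> (\<forall>x y. D (x + y) = D x + D y) \<and> (\<forall>x y. D (x * y) = D x * y + x * D y)"

text \<open>Elements of the Ore algebra K<D> are represented by their (finitely supported)
  coefficient functions: p represents  sum_i (p i) D^i  (coefficients on the left).\<close>

definition opconst :: "'a::ring_1 \<Rightarrow> (nat \<Rightarrow> 'a)" where
  "opconst c = (\<lambda>i. if i = 0 then c else 0)"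

definition opD :: "nat \<Rightarrow> 'a::ring_1" where
  "opD = (\<lambda>i. if i = 1 then 1 else 0)"

definition opadd :: "(nat \<Rightarrow> 'a::ring_1) \<Rightarrow> (nat \<Rightarrow> 'a) \<Rightarrow> (nat \<Rightarrow> 'a)" where
  "opadd p q = (\<lambda>i. p i + q i)"

text \<open>Product in K<D>, from  (a D^i)(b D^j) = sum_l binom(i,l) a D^l(b) D^(i-l+j).\<close>
definition opmul :: "('a::ring_1 \<Rightarrow> 'a) \<Rightarrow> (nat \<Rightarrow> 'a) \<Rightarrow> (nat \<Rightarrow> 'a) \<Rightarrow> (nat \<Rightarrow> 'a)" where
  "opmul D p q = (\<lambda>m. \<Sum>i\<in>{i. p i \<noteq> 0}. \<Sum>j\<in>{j. q j \<noteq> 0}. \<Sum>l\<in>{..i}.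
      (if i - l + j = m then p i * of_nat (i choose l) * (D ^^ l) (q j) else 0))"

fun oppow :: "('a::ring_1 \<Rightarrow> 'a) \<Rightarrow> (nat \<Rightarrow> 'a) \<Rightarrow> nat \<Rightarrow> (nat \<Rightarrow> 'a)" where
  "oppow D p 0 = opconst 1"
| "oppow D p (Suc m) = opmul D p (oppow D p m)"

text \<open>Binomially normalized operator  sum_{i=0}^n binom(n,i) b_i D^(n-i).\<close>
definition normop :: "nat \<Rightarrow> (nat \<Rightarrow> 'a::ring_1) \<Rightarrow> (nat \<Rightarrow> 'a)" where
  "normop n b = (\<lambda>j. if j \<le> n then of_nat (n choose (n - j)) * b (n - j) else 0)"

definition nabla :: "(nat \<Rightarrow> 'a::ring_1) \<Rightarrow> (nat \<Rightarrow> 'a)" where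
  "nabla b = opadd opD (opconst (b 1))"

definition gw_decomp :: "('a::ring_1 \<Rightarrow> 'a) \<Rightarrow> nat \<Rightarrow> (nat \<Rightarrow> 'a) \<Rightarrow> (nat \<Rightarrow> 'a) \<Rightarrow> bool" where
  "gw_decomp D n b I \<longleftrightarrow>
     normop n b = (\<lambda>j. oppow D (nabla b) n j +
        (\<Sum>k\<in>{2..n}. opmul D (opconst (of_nat (n choose k) * I k)) (oppow D (nabla b) (n - k)) j))"

definition gw_welldef :: "('a::ring_1 \<Rightarrow> 'a) \<Rightarrow> nat \<Rightarrow> (nat \<Rightarrow> 'a) \<Rightarrow> bool" where
  "gw_welldef D n b \<longleftrightarrow> (\<exists>I. gw_decomp D n b I) \<and>
     (\<forall>I J. gw_decomp D n b I \<longrightarrow> gw_decomp D n b J \<longrightarrow> (\<forall>k\<in>{2..n}. I k = J k))"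

definition gwI :: "('a::ring_1 \<Rightarrow> 'a) \<Rightarrow> nat \<Rightarrow> (nat \<Rightarrow> 'a) \<Rightarrow> nat \<Rightarrow> 'a" where
  "gwI D n b k = (THE c. \<exists>I. gw_decomp D n b I \<and> I k = c)"

text \<open>Coefficients of the gauge transform f^{-1} L f (g = f^{-1}):
  a~_m = sum_{i=0}^m binom(m,i) f^{-1} a_i D^(m-i)(f).\<close>
definition gauge_coeffs :: "('a::ring_1 \<Rightarrow> 'a) \<Rightarrow> (nat \<Rightarrow> 'a) \<Rightarrow> 'a \<Rightarrow> 'a \<Rightarrow> (nat \<Rightarrow> 'a)" where
  "gauge_coeffs D a f g = (\<lambda>m. \<Sum>i\<le>m. of_nat (m choose i) * g * a i * (D ^^ (m - i)) f)"

end

theory Submission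
  imports Defs
begin

definition mulD :: "('a::ring_1 \<Rightarrow> 'a) \<Rightarrow> (nat \<Rightarrow> 'a) \<Rightarrow> nat \<Rightarrow> 'a" where
  "mulD D q = (\<lambda>i. D (q i) + (if i = 0 then 0 else q (i - 1)))"

definition bnd :: "(nat \<Rightarrow> 'a::zero) \<Rightarrow> nat \<Rightarrow> bool" where
  "bnd p N \<longleftrightarrow> (\<forall>i>N. p i = 0)"

lemma dr_add: "diffring D \<Longrightarrow> D (x + y) = D x + D y"
  by (simp add: diffring_def)
lemma dr_mult: "diffring D \<Longrightarrow> D (x * y) = D x * y + x * D y"
  by (simp add: diffring_def)
lemma dr_zero: "diffring D \<Longrightarrow> D 0 = 0"
  using dr_add[of D 0 0] by simp
lemma dr_one: "diffring D \<Longrightarrow> D 1 = 0"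
  using dr_mult[of D 1 1] by simp
lemma dr_sum: "diffring D \<Longrightarrow> D (sum h S) = (\<Sum>x\<in>S. D (h x))"
proof (induction S rule: infinite_finite_induct)
  case (infinite A) then show ?case by (simp add: dr_zero)
next
  case empty then show ?case by (simp add: dr_zero)
next
  case (insert x F) then show ?case by (simp add: dr_add)
qed
lemma dr_ofnat: "diffring D \<Longrightarrow> D (of_nat k * x) = of_nat k * D x"
  by (induction k) (simp_all add: dr_zero dr_add distrib_right)
lemma dr_ofnat_pow: "diffring D \<Longrightarrow> D (of_nat k * (D ^^ l) x) = of_nat k * (D ^^ Suc l) x"
  by (subst dr_ofnat) auto
lemma dr_if: "diffring D \<Longrightarrow> D (if c then x else 0) = (if c then D x else 0)"
  by (simp add: dr_zero)
lemma funpow_zero: "diffring D \<Longrightarrow> (D ^^ l) 0 = 0"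
  by (induction l) (simp_all add: dr_zero)
lemma funpow_one: "diffring D \<Longrightarrow> 0 < l \<Longrightarrow> (D ^^ l) 1 = 0"
proof (induction l)
  case (Suc l) then show ?case by (cases "l = 0") (auto simp add: dr_one dr_zero)
qed simp

lemma choose_split: "(Suc i choose l) = (i choose l) + (if l = 0 then 0 else (i choose (l - 1)))"
  by (cases l) auto

lemma inner:
  assumes dr: "diffring D"
  shows "(\<Sum>l\<le>Suc i. if Suc i - l + j = m then of_nat (Suc i choose l) * (D^^l) x else 0)
   = (\<Sum>l\<le>i. if i - l + j = m then of_nat (i choose l) * (D^^Suc l) x else 0)
     + (if m = 0 then 0 else \<Sum>l\<le>i. if i - l + j = m - 1 then of_nat (i choose l) * (D^^l) x else (0::'a::ring_1))"
proof -
  define A where "A l = (if Suc i - l + j = m then of_nat (i choose l) * (D^^l) x else (0::'a))" for l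
  define B where "B l = (if Suc i - l + j = m \<and> l \<noteq> 0 then of_nat (i choose (l - 1)) * (D^^l) x else (0::'a))" for l
  have "(\<Sum>l\<le>Suc i. if Suc i - l + j = m then of_nat (Suc i choose l) * (D^^l) x else 0)
      = (\<Sum>l\<le>Suc i. A l + B l)"
    by (rule sum.cong) (auto simp: A_def B_def choose_split distrib_right)
  also have "\<dots> = sum A {..Suc i} + sum B {..Suc i}" by (simp add: sum.distrib)
  also have "sum A {..Suc i} = sum A {..i}" by (simp add: A_def binomial_eq_0)
  also have "sum A {..i} = (if m = 0 then 0 else \<Sum>l\<le>i. if i - l + j = m - 1 then of_nat (i choose l) * (D^^l) x else 0)"
    by (auto simp: A_def intro!: sum.cong)
  also have "sum B {..Suc i} = (\<Sum>l\<le>i. if i - l + j = m then of_nat (i choose l) * (D^^Suc l) x else 0)"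
    by (subst sum.atMost_Suc_shift) (simp add: B_def cong: if_cong del: funpow.simps)
  finally show ?thesis by (simp add: add.commute)
qed


lemma mulD_pow_Suc: "(mulD D ^^ Suc i) q m = D ((mulD D ^^ i) q m) + (if m = 0 then 0 else (mulD D ^^ i) q (m - 1))"
  by (simp add: mulD_def)

lemma K1':
  assumes dr: "diffring D" and fin: "finite S" and sub: "\<forall>j. j \<notin> S \<longrightarrow> q j = 0"
  shows "(\<Sum>j\<in>S. \<Sum>l\<le>i. (if i - l + j = m then of_nat (i choose l) * (D ^^ l) (q j) else 0)) = (mulD D ^^ i) q m"
proof (induction i arbitrary: m)
  case 0
  have "(\<Sum>j\<in>S. \<Sum>l\<le>(0::nat). (if 0 - l + j = m then of_nat (0 choose l) * (D ^^ l) (q j) else 0))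
      = (\<Sum>j\<in>S. if j = m then q j else 0)" by (intro sum.cong) auto
  also have "\<dots> = q m" using fin sub by (simp add: sum.delta')
  finally show ?case by simp
next
  case (Suc i)
  have "(\<Sum>j\<in>S. \<Sum>l\<le>Suc i. (if Suc i - l + j = m then of_nat (Suc i choose l) * (D ^^ l) (q j) else 0))
     = (\<Sum>j\<in>S. (\<Sum>l\<le>i. if i - l + j = m then of_nat (i choose l) * (D^^Suc l) (q j) else 0)
     + (if m = 0 then 0 else \<Sum>l\<le>i. if i - l + j = m - 1 then of_nat (i choose l) * (D^^l) (q j) else 0))"
    by (rule sum.cong[OF refl], rule inner[OF dr])
  also have "\<dots> = (\<Sum>j\<in>S. \<Sum>l\<le>i. if i - l + j = m then of_nat (i choose l) * (D^^Suc l) (q j) else 0)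
     + (if m = 0 then 0 else \<Sum>j\<in>S. \<Sum>l\<le>i. if i - l + j = m - 1 then of_nat (i choose l) * (D^^l) (q j) else 0)"
    by (simp add: sum.distrib)
  also have "(\<Sum>j\<in>S. \<Sum>l\<le>i. if i - l + j = m then of_nat (i choose l) * (D^^Suc l) (q j) else 0)
     = D (\<Sum>j\<in>S. \<Sum>l\<le>i. if i - l + j = m then of_nat (i choose l) * (D^^l) (q j) else 0)"
    by (simp add: dr_sum[OF dr] dr_if[OF dr] dr_ofnat_pow[OF dr] cong: if_cong del: funpow.simps)
  finally show ?case by (simp only: Suc.IH mulD_pow_Suc)
qed

lemma bnd_finite: "bnd q M \<Longrightarrow> finite {j. q j \<noteq> 0}"
  unfolding bnd_def by (rule finite_subset[of _ "{..M}"]) (auto simp: not_less[symmetric])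

lemma K1:
  assumes dr: "diffring D" and bp: "bnd p N" and bq: "bnd q M"
  shows "opmul D p q m = (\<Sum>i\<le>N. p i * (mulD D ^^ i) q m)"
proof -
  let ?S = "{j. q j \<noteq> 0}"
  have fS: "finite ?S" using bnd_finite[OF bq] .
  have "opmul D p q m = (\<Sum>i\<in>{i. p i \<noteq> 0}. p i * (\<Sum>j\<in>?S. \<Sum>l\<le>i. (if i - l + j = m then of_nat (i choose l) * (D ^^ l) (q j) else 0)))"
    unfolding opmul_def by (simp add: sum_distrib_left mult.assoc if_distrib cong: if_cong)
  also have "\<dots> = (\<Sum>i\<in>{i. p i \<noteq> 0}. p i * (mulD D ^^ i) q m)"
    using K1'[OF dr fS] by simp
  also have "\<dots> = (\<Sum>i\<le>N. p i * (mulD D ^^ i) q m)"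
    using bp unfolding bnd_def
    by (intro sum.mono_neutral_left) (auto simp: not_less[symmetric])
  finally show ?thesis .
qed

lemma bnd_mono: "bnd p N \<Longrightarrow> N \<le> N' \<Longrightarrow> bnd p N'"
  by (simp add: bnd_def)

lemma bnd_mulD: "diffring D \<Longrightarrow> bnd q M \<Longrightarrow> bnd (mulD D q) (Suc M)"
  by (simp add: bnd_def mulD_def dr_zero)

lemma bnd_mulD_pow: "diffring D \<Longrightarrow> bnd q M \<Longrightarrow> bnd ((mulD D ^^ i) q) (M + i)"
proof (induction i)
  case (Suc i) then show ?case using bnd_mulD[of D "(mulD D ^^ i) q" "M + i"] by simp
qed simp

lemma bnd_opmul:
  assumes dr: "diffring D" and bp: "bnd p N" and bq: "bnd q M"
  shows "bnd (opmul D p q) (N + M)"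
  unfolding bnd_def
proof (intro allI impI)
  fix m assume m: "N + M < m"
  have "(mulD D ^^ i) q m = 0" if "i \<le> N" for i
    using bnd_mulD_pow[OF dr bq, of i] m that unfolding bnd_def by auto
  then show "opmul D p q m = 0" by (simp add: K1[OF dr bp bq])
qed

lemma K2:
  assumes dr: "diffring D" and bX: "bnd X B" and br: "bnd r R"
  shows "opmul D (mulD D X) r = mulD D (opmul D X r)"
proof (rule ext)
  fix m
  define W where "W k = (mulD D ^^ k) r" for k
  have WS: "W (Suc k) m = D (W k m) + (if m = 0 then 0 else W k (m - 1))" for k
    by (simp add: W_def mulD_pow_Suc del: funpow.simps)
  have "opmul D (mulD D X) r m = (\<Sum>k\<le>Suc B. mulD D X k * W k m)"
    using K1[OF dr bnd_mulD[OF dr bX] br] by (simp add: W_def)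
  also have "\<dots> = (\<Sum>k\<le>Suc B. D (X k) * W k m) + (\<Sum>k\<le>Suc B. (if k = 0 then 0 else X (k - 1)) * W k m)"
    by (simp add: mulD_def distrib_right sum.distrib)
  also have "(\<Sum>k\<le>Suc B. D (X k) * W k m) = (\<Sum>k\<le>B. D (X k) * W k m)"
    using bX by (simp add: bnd_def dr_zero[OF dr])
  also have "(\<Sum>k\<le>Suc B. (if k = 0 then 0 else X (k - 1)) * W k m) = (\<Sum>k\<le>B. X k * W (Suc k) m)"
    by (subst sum.atMost_Suc_shift) simp
  also have "(\<Sum>k\<le>B. X k * W (Suc k) m) = (\<Sum>k\<le>B. X k * D (W k m)) + (if m = 0 then 0 else (\<Sum>k\<le>B. X k * W k (m - 1)))"
    by (simp add: WS distrib_left sum.distrib)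
  finally have L: "opmul D (mulD D X) r m = (\<Sum>k\<le>B. D (X k) * W k m) + ((\<Sum>k\<le>B. X k * D (W k m)) + (if m = 0 then 0 else (\<Sum>k\<le>B. X k * W k (m - 1))))" .
  have "mulD D (opmul D X r) m = D (\<Sum>k\<le>B. X k * W k m) + (if m = 0 then 0 else (\<Sum>k\<le>B. X k * W k (m - 1)))"
    by (simp add: mulD_def K1[OF dr bX br] W_def)
  also have "D (\<Sum>k\<le>B. X k * W k m) = (\<Sum>k\<le>B. D (X k) * W k m) + (\<Sum>k\<le>B. X k * D (W k m))"
    by (simp add: dr_sum[OF dr] dr_mult[OF dr] sum.distrib)
  finally show "opmul D (mulD D X) r m = mulD D (opmul D X r) m" using L by (simp add: add.assoc)
qed

lemma K3:
  assumes dr: "diffring D" and bq: "bnd q M" and br: "bnd r R"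
  shows "opmul D ((mulD D ^^ i) q) r = (mulD D ^^ i) (opmul D q r)"
proof (induction i)
  case (Suc i)
  have "opmul D ((mulD D ^^ Suc i) q) r = mulD D (opmul D ((mulD D ^^ i) q) r)"
    using K2[OF dr bnd_mulD_pow[OF dr bq, of i] br] by simp
  then show ?case using Suc.IH by simp
qed simp

lemma assoc:
  assumes dr: "diffring D" and bp: "bnd p N" and bq: "bnd q M" and br: "bnd r R"
  shows "opmul D (opmul D p q) r = opmul D p (opmul D q r)"
proof (rule ext)
  fix m
  define W where "W k = (mulD D ^^ k) r" for k
  have "opmul D (opmul D p q) r m = (\<Sum>k\<le>N+M. opmul D p q k * W k m)"
    using K1[OF dr bnd_opmul[OF dr bp bq] br] by (simp add: W_def)
  also have "\<dots> = (\<Sum>k\<le>N+M. (\<Sum>i\<le>N. p i * (mulD D ^^ i) q k) * W k m)"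
    by (simp add: K1[OF dr bp bq])
  also have "\<dots> = (\<Sum>i\<le>N. p i * (\<Sum>k\<le>N+M. (mulD D ^^ i) q k * W k m))"
    by (simp add: sum_distrib_right sum_distrib_left mult.assoc sum.swap[of _ "{..N+M}"])
  also have "\<dots> = (\<Sum>i\<le>N. p i * opmul D ((mulD D ^^ i) q) r m)"
  proof (rule sum.cong[OF refl])
    fix i assume "i \<in> {..N}"
    then have "bnd ((mulD D ^^ i) q) (N + M)"
      using bnd_mono[OF bnd_mulD_pow[OF dr bq, of i]] by auto
    then show "p i * (\<Sum>k\<le>N+M. (mulD D ^^ i) q k * W k m) = p i * opmul D ((mulD D ^^ i) q) r m"
      by (simp add: K1[OF dr _ br] W_def)
  qed
  also have "\<dots> = (\<Sum>i\<le>N. p i * (mulD D ^^ i) (opmul D q r) m)"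
    by (simp add: K3[OF dr bq br])
  also have "\<dots> = opmul D p (opmul D q r) m"
    by (simp add: K1[OF dr bp bnd_opmul[OF dr bq br]])
  finally show "opmul D (opmul D p q) r m = opmul D p (opmul D q r) m" .
qed


lemma Wc:
  assumes dr: "diffring D"
  shows "(mulD D ^^ i) (opconst f) m = (if m \<le> i then of_nat (i choose m) * (D^^(i - m)) f else 0)"
proof (induction i arbitrary: m)
  case 0 then show ?case by (simp add: opconst_def)
next
  case (Suc i)
  show ?case
  proof (cases m)
    case 0 then show ?thesis unfolding mulD_pow_Suc using Suc.IH[of 0] by simp
  next
    case (Suc m')
    have e: "(mulD D ^^ Suc i) (opconst f) m = D ((mulD D ^^ i) (opconst f) (Suc m')) + (mulD D ^^ i) (opconst f) m'"
      by (simp add: mulD_pow_Suc Suc del: funpow.simps)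
    show ?thesis
    proof (cases "m' < i")
      case True
      then have "i - m' = Suc (i - Suc m')" by simp
      then show ?thesis using True unfolding e Suc.IH
        by (simp add: Suc dr_ofnat_pow[OF dr] distrib_right del: funpow.simps)
    next
      case False
      then show ?thesis unfolding e Suc.IH
        by (cases "m' = i") (auto simp add: Suc dr_zero[OF dr])
    qed
  qed
qed

lemma bnd_opconst: "bnd (opconst c) 0"
  by (simp add: bnd_def opconst_def)
lemma bnd_normop: "bnd (normop n b) n"
  by (simp add: bnd_def normop_def)
lemma bnd_nabla: "bnd (nabla b) 1"
  by (simp add: bnd_def nabla_def opadd_def opD_def opconst_def)
lemma bnd_oppow: "diffring D \<Longrightarrow> bnd p N \<Longrightarrow> bnd (oppow D p k) (N * k)"
proof (induction k)
  case 0 then show ?case by (simp add: bnd_opconst)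
next
  case (Suc k) then show ?case using bnd_opmul[of D p N "oppow D p k" "N * k"] by (simp add: add.commute)
qed

lemma opconst_left:
  assumes dr: "diffring D" and bZ: "bnd Z M"
  shows "opmul D (opconst c) Z = (\<lambda>m. c * Z m)"
  by (rule ext) (subst K1[OF dr bnd_opconst bZ], simp add: opconst_def)

lemma smul_left:
  assumes dr: "diffring D" and bY: "bnd Y N" and bZ: "bnd Z M"
  shows "opmul D (\<lambda>i. s * Y i) Z = (\<lambda>m. s * opmul D Y Z m)"
proof -
  have b: "bnd (\<lambda>i. s * Y i) N" using bY by (simp add: bnd_def)
  show ?thesis
    by (rule ext) (simp add: K1[OF dr b bZ] K1[OF dr bY bZ] sum_distrib_left mult.assoc)
qed

lemma right_one:
  assumes dr: "diffring D" and bZ: "bnd Z N"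
  shows "opmul D Z (opconst 1) = Z"
proof (rule ext)
  fix m
  have "opmul D Z (opconst 1) m = (\<Sum>i\<le>N. Z i * (if m \<le> i then of_nat (i choose m) * (D^^(i - m)) 1 else 0))"
    by (simp add: K1[OF dr bZ bnd_opconst] Wc[OF dr])
  also have "\<dots> = (\<Sum>i\<le>N. if i = m then Z i else 0)"
    by (rule sum.cong) (auto simp: funpow_one[OF dr])
  also have "\<dots> = Z m" using bZ by (auto simp: bnd_def)
  finally show "opmul D Z (opconst 1) m = Z m" .
qed

definition gconj :: "('a::ring_1 \<Rightarrow> 'a) \<Rightarrow> 'a \<Rightarrow> 'a \<Rightarrow> (nat \<Rightarrow> 'a) \<Rightarrow> nat \<Rightarrow> 'a" where
  "gconj D u v X = opmul D (opmul D (opconst u) X) (opconst v)"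

lemma gconj_formula:
  assumes dr: "diffring D" and bX: "bnd X N"
  shows "gconj D u v X m = (\<Sum>i\<le>N. u * X i * (if m \<le> i then of_nat (i choose m) * (D^^(i - m)) v else 0))"
proof -
  have b: "bnd (\<lambda>i. u * X i) N" using bX by (simp add: bnd_def)
  show ?thesis unfolding gconj_def opconst_left[OF dr bX] K1[OF dr b bnd_opconst] Wc[OF dr] ..
qed

lemma bnd_gconj: "diffring D \<Longrightarrow> bnd X N \<Longrightarrow> bnd (gconj D u v X) N"
  unfolding gconj_def using bnd_opmul[OF _ bnd_opmul[OF _ bnd_opconst] bnd_opconst] by fastforce

lemma gconj_lin:
  assumes dr: "diffring D" and bX: "bnd X N" and fK: "finite K" and bY: "\<forall>k\<in>K. bnd (Y k) N"
  shows "gconj D u v (\<lambda>j. X j + (\<Sum>k\<in>K. Y k j)) = (\<lambda>j. gconj D u v X j + (\<Sum>k\<in>K. gconj D u v (Y k) j))"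
proof -
  have b: "bnd (\<lambda>j. X j + (\<Sum>k\<in>K. Y k j)) N" using bX bY by (simp add: bnd_def)
  have Yk: "gconj D u v (Y k) j = (\<Sum>i\<le>N. u * Y k i * (if j \<le> i then of_nat (i choose j) * (D^^(i - j)) v else 0))"
    if "k \<in> K" for k j using bY that gconj_formula[OF dr] by blast
  show ?thesis
    by (rule ext) (simp add: gconj_formula[OF dr b] gconj_formula[OF dr bX] Yk
        distrib_left distrib_right sum.distrib sum_distrib_left sum_distrib_right sum.swap[of _ K])
qed


lemma opconst_mul: "diffring D \<Longrightarrow> opmul D (opconst a) (opconst b) = opconst (a * b)"
  by (subst opconst_left[OF _ bnd_opconst]) (auto simp: opconst_def)

lemma gconj_hom:
  assumes dr: "diffring D" and vu: "v * u = 1" and bX: "bnd X N" and bY: "bnd Y M"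
  shows "gconj D u v (opmul D X Y) = opmul D (gconj D u v X) (gconj D u v Y)"
proof -
  let ?u = "opconst u" and ?v = "opconst v"
  have buX: "bnd (opmul D ?u X) (0 + N)" by (rule bnd_opmul[OF dr bnd_opconst bX])
  have buY: "bnd (opmul D ?u Y) (0 + M)" by (rule bnd_opmul[OF dr bnd_opconst bY])
  have bYv: "bnd (opmul D (opmul D ?u Y) ?v) (0 + M + 0)" by (rule bnd_opmul[OF dr buY bnd_opconst])
  have vuY: "opmul D ?v (opmul D ?u Y) = Y"
    using buY by (simp add: opconst_left[OF dr] opconst_left[OF dr bY] mult.assoc[symmetric] vu)
  have "opmul D (gconj D u v X) (gconj D u v Y) = opmul D (opmul D ?u X) (opmul D ?v (opmul D (opmul D ?u Y) ?v))"
    unfolding gconj_def by (rule assoc[OF dr buX bnd_opconst bYv])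
  also have "opmul D ?v (opmul D (opmul D ?u Y) ?v) = opmul D (opmul D ?v (opmul D ?u Y)) ?v"
    by (rule assoc[OF dr bnd_opconst buY bnd_opconst, symmetric])
  also have "\<dots> = opmul D Y ?v" by (simp add: vuY)
  also have "opmul D (opmul D ?u X) (opmul D Y ?v) = opmul D (opmul D (opmul D ?u X) Y) ?v"
    by (rule assoc[OF dr buX bY bnd_opconst, symmetric])
  also have "opmul D (opmul D ?u X) Y = opmul D ?u (opmul D X Y)"
    by (rule assoc[OF dr bnd_opconst bX bY])
  finally show ?thesis unfolding gconj_def ..
qed

lemma gconj_inv:
  assumes dr: "diffring D" and vu: "v * u = 1" and bX: "bnd X N"
  shows "gconj D v u (gconj D u v X) = X"
proof -
  let ?u = "opconst u" and ?v = "opconst v"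
  have buX: "bnd (opmul D ?u X) (0 + N)" by (rule bnd_opmul[OF dr bnd_opconst bX])
  have "gconj D v u (gconj D u v X) = opmul D (opmul D (opmul D ?v (opmul D ?u X)) ?v) ?u"
    unfolding gconj_def by (subst assoc[OF dr bnd_opconst buX bnd_opconst]) rule
  also have "opmul D ?v (opmul D ?u X) = X"
    using buX by (simp add: opconst_left[OF dr] opconst_left[OF dr bX] mult.assoc[symmetric] vu)
  also have "opmul D (opmul D X ?v) ?u = opmul D X (opmul D ?v ?u)"
    by (rule assoc[OF dr bX bnd_opconst bnd_opconst])
  also have "\<dots> = X" by (simp add: opconst_mul[OF dr] vu right_one[OF dr bX])
  finally show ?thesis .
qed

lemma gconj_smul:
  assumes dr: "diffring D" and vu: "v * u = 1" and bX: "bnd X N"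
  shows "gconj D u v (opmul D (opconst c) X) = opmul D (opconst (u * c * v)) (gconj D u v X)"
proof -
  have b1: "bnd (\<lambda>m. c * X m) N" using bX by (simp add: bnd_def)
  have b2: "bnd (\<lambda>m. u * X m) N" using bX by (simp add: bnd_def)
  have b3: "bnd (\<lambda>m. u * (c * X m)) N" using bX by (simp add: bnd_def)
  have "gconj D u v (opmul D (opconst c) X) = opmul D (\<lambda>m. (u * c) * X m) (opconst v)"
    unfolding gconj_def opconst_left[OF dr bX] opconst_left[OF dr b1] by (simp add: mult.assoc)
  also have "\<dots> = (\<lambda>m. (u * c) * opmul D X (opconst v) m)"
    by (rule smul_left[OF dr bX bnd_opconst])
  finally have L: "gconj D u v (opmul D (opconst c) X) = (\<lambda>m. (u * c) * opmul D X (opconst v) m)" .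
  have bc: "bnd (gconj D u v X) N" by (rule bnd_gconj[OF dr bX])
  have "gconj D u v X = (\<lambda>m. u * opmul D X (opconst v) m)"
    unfolding gconj_def opconst_left[OF dr bX] by (rule smul_left[OF dr bX bnd_opconst])
  then have R: "opmul D (opconst (u * c * v)) (gconj D u v X) = (\<lambda>m. (u * c * v) * (u * opmul D X (opconst v) m))"
    using opconst_left[OF dr bc] by simp
  have "u * c * v * (u * y) = u * c * y" for y
    by (metis mult.assoc mult_1_right vu)
  then show ?thesis unfolding L R by simp
qed

lemma gconj_one:
  assumes dr: "diffring D" and uv: "u * v = 1"
  shows "gconj D u v (opconst 1) = opconst 1"
  unfolding gconj_def by (simp add: opconst_mul[OF dr] uv)

lemma gconj_pow:
  assumes dr: "diffring D" and uv: "u * v = 1" and vu: "v * u = 1" and bX: "bnd X N"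
  shows "gconj D u v (oppow D X k) = oppow D (gconj D u v X) k"
proof (induction k)
  case 0 then show ?case by (simp add: gconj_one[OF dr uv])
next
  case (Suc k)
  then show ?case by (simp add: gconj_hom[OF dr vu bX bnd_oppow[OF dr bX]])
qed


lemma ofnat_c: "x * (of_nat k * y) = of_nat k * (x * (y::'a::ring_1))"
  by (metis mult.assoc mult_of_nat_commute)

lemma ofnat_c2: "g * (of_nat p * x) * (of_nat q * y) = of_nat (p * q) * (g * x * (y::'a::ring_1))"
proof -
  have "g * (of_nat p * x) * (of_nat q * y) = g * of_nat p * x * of_nat q * y" by (simp add: mult.assoc)
  also have "\<dots> = of_nat p * g * x * of_nat q * y" by (simp add: mult_of_nat_commute)
  also have "\<dots> = of_nat p * (g * x * of_nat q) * y" by (simp add: mult.assoc)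
  also have "g * x * of_nat q = of_nat q * (g * x)" by (simp add: mult_of_nat_commute)
  finally show ?thesis by (simp add: mult.assoc)
qed

lemma ofnat_c3: "u * (of_nat p * x) * v = of_nat p * (u * x * (v::'a::ring_1))"
  by (metis mult.assoc mult_of_nat_commute)

lemma flip_sum: "(\<Sum>i\<le>(n::nat). h i) = (\<Sum>i\<le>n. h (n - i))"
  by (rule sum.reindex_bij_witness[where i="\<lambda>i. n - i" and j="\<lambda>i. n - i"]) auto

lemma choose_id: "m \<le> n \<Longrightarrow> i \<le> n - m \<Longrightarrow> (n choose i) * (n - i choose m) = (n choose (n - m)) * (n - m choose i)"
proof -
  assume a: "m \<le> n" "i \<le> n - m"
  have "(n choose (n - m)) * (n - m choose i) = (n choose i) * ((n - i) choose (n - m - i))"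
    by (rule choose_mult) (use a in auto)
  also have "(n - i) choose (n - m - i) = (n - i) choose m"
  proof -
    have "n - m - i = n - i - m" by simp
    then show ?thesis using binomial_symmetric[of m "n - i"] a by simp
  qed
  finally show ?thesis by simp
qed

lemma part2:
  assumes dr: "diffring D"
  shows "gconj D g f (normop n a) = normop n (gauge_coeffs D a f g)"
proof (rule ext)
  fix m
  have "gconj D g f (normop n a) m = (\<Sum>i\<le>n. g * normop n a i * (if m \<le> i then of_nat (i choose m) * (D^^(i - m)) f else 0))"
    by (rule gconj_formula[OF dr bnd_normop])
  also have "\<dots> = (\<Sum>i\<le>n. g * normop n a (n - i) * (if m \<le> n - i then of_nat (n - i choose m) * (D^^(n - i - m)) f else 0))"
    by (rule flip_sum)
  also have "\<dots> = (\<Sum>i\<le>n. if i \<le> n - m \<and> m \<le> n then of_nat ((n choose (n - m)) * (n - m choose i)) * (g * a i * (D^^(n - m - i)) f) else 0)"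
  proof (rule sum.cong[OF refl])
    fix i assume i: "i \<in> {..n}"
    show "g * normop n a (n - i) * (if m \<le> n - i then of_nat (n - i choose m) * (D^^(n - i - m)) f else 0)
      = (if i \<le> n - m \<and> m \<le> n then of_nat ((n choose (n - m)) * (n - m choose i)) * (g * a i * (D^^(n - m - i)) f) else 0)"
    proof (cases "i \<le> n - m \<and> m \<le> n")
      case True
      then have e: "n - i - m = n - m - i" "n - (n - i) = i" using i by auto
      show ?thesis using True i
        by (simp only: e normop_def choose_id[OF _ _, symmetric] binomial_symmetric[of i n, symmetric] ofnat_c2 if_True simp_thms) (auto simp: ofnat_c2[unfolded of_nat_mult])
    next
      case False
      then show ?thesis using i by auto
    qed
  qed
  also have "\<dots> = normop n (gauge_coeffs D a f g) m"
  proof (cases "m \<le> n")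
    case True
    have "(\<Sum>i\<le>n. if i \<le> n - m \<and> m \<le> n then of_nat ((n choose (n - m)) * (n - m choose i)) * (g * a i * (D^^(n - m - i)) f) else 0)
        = (\<Sum>i\<le>n - m. of_nat ((n choose (n - m)) * (n - m choose i)) * (g * a i * (D^^(n - m - i)) f))"
      using True by (intro sum.mono_neutral_cong_right) auto
    also have "\<dots> = normop n (gauge_coeffs D a f g) m"
      using True by (simp add: normop_def gauge_coeffs_def sum_distrib_left mult.assoc)
    finally show ?thesis .
  next
    case False then show ?thesis by (simp add: normop_def)
  qed
  finally show "gconj D g f (normop n a) m = normop n (gauge_coeffs D a f g) m" .
qed

lemma gconj_nabla:
  assumes dr: "diffring D" and a0: "a 0 = 1" and gf: "g * f = 1"
  shows "gconj D g f (nabla a) = nabla (gauge_coeffs D a f g)"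
proof (rule ext)
  fix m
  have "gconj D g f (nabla a) m = (\<Sum>i\<le>1. g * nabla a i * (if m \<le> i then of_nat (i choose m) * (D^^(i - m)) f else 0))"
    by (rule gconj_formula[OF dr bnd_nabla])
  also have "\<dots> = nabla (gauge_coeffs D a f g) m"
  proof -
    have s1: "(\<Sum>i\<le>(1::nat). h i) = h 0 + h 1" for h :: "nat \<Rightarrow> 'a"
      by (simp add: sum.atMost_Suc)
    have b1: "gauge_coeffs D a f g 1 = g * D f + g * a 1 * f"
      unfolding gauge_coeffs_def s1 by (simp add: a0)
    show ?thesis
    proof (cases m)
      case 0
      then show ?thesis unfolding s1 using b1 by (simp add: nabla_def opadd_def opD_def opconst_def distrib_left add.commute)
    next
      case (Suc m')
      then show ?thesis unfolding s1
        by (cases m') (simp_all add: nabla_def opadd_def opD_def opconst_def gf)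
    qed
  qed
  finally show "gconj D g f (nabla a) m = nabla (gauge_coeffs D a f g) m" .
qed

lemma transfer:
  assumes dr: "diffring D" and uv: "u * v = 1" and vu: "v * u = 1"
    and hN: "normop n b' = gconj D u v (normop n b)" and hn: "nabla b' = gconj D u v (nabla b)"
    and dec: "gw_decomp D n b I"
  shows "gw_decomp D n b' (\<lambda>k. u * I k * v)"
proof -
  let ?P = "oppow D (nabla b)"
  have bP: "bnd (?P k) n" if "k \<le> n" for k
    using bnd_oppow[OF dr bnd_nabla, of b k] that by (auto intro: bnd_mono)
  have bY: "\<forall>k\<in>{2..n}. bnd (opmul D (opconst (of_nat (n choose k) * I k)) (?P (n - k))) n"
    using bnd_opmul[OF dr bnd_opconst bP] by auto
  have "normop n b' = gconj D u v (\<lambda>j. ?P n j + (\<Sum>k\<in>{2..n}. opmul D (opconst (of_nat (n choose k) * I k)) (?P (n - k)) j))"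
    using dec hN by (simp add: gw_decomp_def)
  also have "\<dots> = (\<lambda>j. gconj D u v (?P n) j + (\<Sum>k\<in>{2..n}. gconj D u v (opmul D (opconst (of_nat (n choose k) * I k)) (?P (n - k))) j))"
    by (rule gconj_lin[OF dr bP[OF le_refl] _ bY]) simp
  also have "\<dots> = (\<lambda>j. oppow D (nabla b') n j + (\<Sum>k\<in>{2..n}. opmul D (opconst (of_nat (n choose k) * (u * I k * v))) (oppow D (nabla b') (n - k)) j))"
    by (simp add: hn gconj_pow[OF dr uv vu bnd_nabla] gconj_smul[OF dr vu bP] ofnat_c3)
  finally show ?thesis by (simp add: gw_decomp_def)
qed


theorem mainTheorem2:
  fixes D :: "'a::ring_1 \<Rightarrow> 'a" and n :: nat and a :: "nat \<Rightarrow> 'a" and f g :: 'a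
  assumes "diffring D"
    and "n \<ge> 2"
    and "a 0 = 1"
    and "f * g = 1" and "g * f = 1"
    and "gw_welldef D n a"
  shows "gauge_coeffs D a f g 0 = 1
    \<and> normop n (gauge_coeffs D a f g) = opmul D (opmul D (opconst g) (normop n a)) (opconst f)
    \<and> (\<forall>k\<in>{2..n}. gwI D n (gauge_coeffs D a f g) k = g * gwI D n a k * f)"
proof -
  note dr = assms(1) and a0 = assms(3) and fg = assms(4) and gf = assms(5)
  define bt where "bt = gauge_coeffs D a f g"
  have p1: "bt 0 = 1" by (simp add: bt_def gauge_coeffs_def a0 gf)
  have hN: "normop n bt = gconj D g f (normop n a)" by (simp add: bt_def part2[OF dr])
  have hn: "nabla bt = gconj D g f (nabla a)" by (simp add: bt_def gconj_nabla[of D a g f, OF dr a0 gf])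
  obtain I where decI: "gw_decomp D n a I"
    and uniq: "\<And>J k. gw_decomp D n a J \<Longrightarrow> k \<in> {2..n} \<Longrightarrow> J k = I k"
    using assms(6) unfolding gw_welldef_def by metis
  have fwd: "gw_decomp D n bt (\<lambda>k. g * I k * f)"
    by (rule transfer[OF dr gf fg hN hn decI])
  have hN': "normop n a = gconj D f g (normop n bt)"
    by (simp add: hN gconj_inv[OF dr fg bnd_normop])
  have hn': "nabla a = gconj D f g (nabla bt)"
    by (simp add: hn gconj_inv[OF dr fg bnd_nabla])
  have bwd: "J k = g * I k * f" if "gw_decomp D n bt J" "k \<in> {2..n}" for J k
  proof -
    have "gw_decomp D n a (\<lambda>k. f * J k * g)"
      by (rule transfer[OF dr fg gf hN' hn' that(1)])
    then have "f * J k * g = I k" using uniq that(2) by blast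
    then have "g * (f * J k * g) * f = g * I k * f" by simp
    then show ?thesis by (simp add: mult.assoc[symmetric] gf) (simp add: mult.assoc gf)
  qed
  have gwa: "gwI D n a k = I k" if "k \<in> {2..n}" for k
    unfolding gwI_def
  proof (rule the_equality)
    show "\<exists>I'. gw_decomp D n a I' \<and> I' k = I k" using decI by blast
  next
    fix c assume "\<exists>I'. gw_decomp D n a I' \<and> I' k = c"
    then obtain I' where "gw_decomp D n a I'" "I' k = c" by blast
    then show "c = I k" using uniq[of I' k] that by simp
  qed
  have gwb: "gwI D n bt k = g * I k * f" if "k \<in> {2..n}" for k
    unfolding gwI_def
  proof (rule the_equality)
    show "\<exists>I'. gw_decomp D n bt I' \<and> I' k = g * I k * f" using fwd by blast
  next
    fix c assume "\<exists>I'. gw_decomp D n bt I' \<and> I' k = c"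
    then obtain I' where "gw_decomp D n bt I'" "I' k = c" by blast
    then show "c = g * I k * f" using bwd[of I' k] that by simp
  qed
  have p2: "normop n bt = opmul D (opmul D (opconst g) (normop n a)) (opconst f)"
    using hN unfolding gconj_def .
  have p3: "\<forall>k\<in>{2..n}. gwI D n bt k = g * gwI D n a k * f"
    using gwa gwb by simp
  show ?thesis using p1 p2 p3 unfolding bt_def by blast
qed

end
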